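(* For every $k\ge1$, $G_k$ is a normal subgroup of $B_k$.
   Context: Let $C_2=\{e,\sigma\}$ with $\sigma=(1,2)$. Define $B_1=C_2$ and $B_k=B_{k-1}\wr C_2$ for $k>1$, with elements written as wreath recursions $(g_1,g_2)\pi$, $g_1,g_2\in B_{k-1}$, $\pi\in C_2$, and multiplication $(g_1,g_2)\pi\cdot(h_1,h_2)\rho=(g_1h_{\pi(1)},g_2h_{\pi(2)})\pi\rho$. Define $G_1=\{e\}$ and, for $k>1$, $G_k=\{(g_1,g_2)\pi\in B_k : g_1g_2\in G_{k-1}\}$. *)

theory Defs
  imports "HOL-Algebra.Group" "HOL-Algebra.Coset"
begin

text \<open>Elements of the iterated wreath products. \<open>Base b\<close> is an element of
  \<open>B_1 = C_2\<close> (\<open>b = True\<close> meaning \<open>\<sigma>\<close>); \<open>Wr g1 g2 p\<close> is the wreath recursion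
  \<open>(g1,g2)\<pi>\<close> with \<open>\<pi> = \<sigma>\<close> iff \<open>p = True\<close>.\<close>
datatype wr = Base bool | Wr wr wr bool

definition perm_app :: "bool \<Rightarrow> nat \<Rightarrow> nat" where
  "perm_app p i = (if p then 3 - i else i)"

fun wr_mult :: "wr \<Rightarrow> wr \<Rightarrow> wr" where
  "wr_mult (Base a) (Base b) = Base (a \<noteq> b)"
| "wr_mult (Wr g1 g2 p) (Wr h1 h2 q) =
     (let h = (\<lambda>i::nat. if i = 1 then h1 else h2)
      in Wr (wr_mult g1 (h (perm_app p 1))) (wr_mult g2 (h (perm_app p 2))) (p \<noteq> q))"
| "wr_mult _ _ = Base False"

text \<open>Carrier of \<open>B_k\<close> (\<open>B_0\<close> is unused and empty).\<close>
fun Bset :: "nat \<Rightarrow> wr set" where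
  "Bset 0 = {}"
| "Bset (Suc 0) = {Base b | b. True}"
| "Bset (Suc (Suc k)) = {Wr g1 g2 p | g1 g2 p. g1 \<in> Bset (Suc k) \<and> g2 \<in> Bset (Suc k)}"

fun wr_one :: "nat \<Rightarrow> wr" where
  "wr_one 0 = Base False"
| "wr_one (Suc 0) = Base False"
| "wr_one (Suc (Suc k)) = Wr (wr_one (Suc k)) (wr_one (Suc k)) False"

definition Bgrp :: "nat \<Rightarrow> wr monoid" where
  "Bgrp k = \<lparr>carrier = Bset k, mult = wr_mult, one = wr_one k\<rparr>"

fun Gset :: "nat \<Rightarrow> wr set" where
  "Gset 0 = {}"
| "Gset (Suc 0) = {wr_one (Suc 0)}"
| "Gset (Suc (Suc k)) = {Wr g1 g2 p | g1 g2 p.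
      Wr g1 g2 p \<in> Bset (Suc (Suc k)) \<and> wr_mult g1 g2 \<in> Gset (Suc k)}"

end

theory Submission
  imports Defs
begin

fun theta :: "wr \<Rightarrow> bool" where
  "theta (Base b) = b"
| "theta (Wr g1 g2 p) = (theta g1 \<noteq> theta g2)"

fun wr_inv :: "wr \<Rightarrow> wr" where
  "wr_inv (Base b) = Base b"
| "wr_inv (Wr g1 g2 p) = (if p then Wr (wr_inv g2) (wr_inv g1) True else Wr (wr_inv g1) (wr_inv g2) False)"

lemma closed: "g \<in> Bset k \<Longrightarrow> h \<in> Bset k \<Longrightarrow> wr_mult g h \<in> Bset k"
  by (induction k arbitrary: g h rule: Bset.induct) (auto simp: perm_app_def Let_def)

lemma wr_mult_Wr: "wr_mult (Wr g1 g2 p) (Wr h1 h2 q) = (if p then Wr (wr_mult g1 h2) (wr_mult g2 h1) (p \<noteq> q)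
   else Wr (wr_mult g1 h1) (wr_mult g2 h2) (p \<noteq> q))"
  by (simp add: perm_app_def Let_def)

lemma assoc: "g \<in> Bset k \<Longrightarrow> h \<in> Bset k \<Longrightarrow> f \<in> Bset k \<Longrightarrow>
   wr_mult (wr_mult g h) f = wr_mult g (wr_mult h f)"
proof (induction k arbitrary: g h f rule: Bset.induct)
  case (3 k)
  then obtain g1 g2 p h1 h2 q f1 f2 r where e: "g = Wr g1 g2 p" "h = Wr h1 h2 q" "f = Wr f1 f2 r"
    and m: "g1 \<in> Bset (Suc k)" "g2 \<in> Bset (Suc k)" "h1 \<in> Bset (Suc k)" "h2 \<in> Bset (Suc k)"
      "f1 \<in> Bset (Suc k)" "f2 \<in> Bset (Suc k)" by auto
  show ?case unfolding e using m
    by (cases p; cases q) (simp_all add: wr_mult_Wr 3(1) closed del: wr_mult.simps)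
qed auto

lemma one_in: "k \<ge> 1 \<Longrightarrow> wr_one k \<in> Bset k"
  by (induction k rule: Bset.induct) auto

lemma one_l: "g \<in> Bset k \<Longrightarrow> wr_mult (wr_one k) g = g"
  by (induction k arbitrary: g rule: Bset.induct) (auto simp: perm_app_def Let_def)

lemma one_r: "g \<in> Bset k \<Longrightarrow> wr_mult g (wr_one k) = g"
  by (induction k arbitrary: g rule: Bset.induct) (auto simp: perm_app_def Let_def)

lemma inv_in: "g \<in> Bset k \<Longrightarrow> wr_inv g \<in> Bset k"
  by (induction k arbitrary: g rule: Bset.induct) auto

lemma inv_l: "g \<in> Bset k \<Longrightarrow> wr_mult (wr_inv g) g = wr_one k"
  by (induction k arbitrary: g rule: Bset.induct) (auto simp: perm_app_def Let_def)

lemma theta_mult: "g \<in> Bset k \<Longrightarrow> h \<in> Bset k \<Longrightarrow> theta (wr_mult g h) = (theta g \<noteq> theta h)"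
  by (induction k arbitrary: g h rule: Bset.induct) (auto simp: perm_app_def Let_def split: if_splits)

lemma theta_one: "\<not> theta (wr_one k)"
  by (induction k rule: wr_one.induct) auto

lemma theta_inv: "g \<in> Bset k \<Longrightarrow> theta (wr_inv g) = theta g"
  by (induction k arbitrary: g rule: Bset.induct) (auto split: if_splits)

lemma Gset_eq: "k \<ge> 1 \<Longrightarrow> Gset k = {g \<in> Bset k. \<not> theta g}"
proof (induction k rule: Bset.induct)
  case (3 k)
  have IH: "Gset (Suc k) = {g \<in> Bset (Suc k). \<not> theta g}" using 3 by simp
  have key: "(wr_mult g1 g2 \<in> Gset (Suc k)) = (theta g1 = theta g2)"
    if "g1 \<in> Bset (Suc k)" "g2 \<in> Bset (Suc k)" for g1 g2
    using that closed[OF that] theta_mult[OF that] IH by blast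
  show ?case
    unfolding Gset.simps Bset.simps
    by (auto simp del: wr_mult.simps simp: key)
qed auto

lemma grp: "k \<ge> 1 \<Longrightarrow> group (Bgrp k)"
proof -
  assume k: "k \<ge> 1"
  show ?thesis
  proof (rule groupI)
    fix x y assume "x \<in> carrier (Bgrp k)" "y \<in> carrier (Bgrp k)"
    then show "x \<otimes>\<^bsub>Bgrp k\<^esub> y \<in> carrier (Bgrp k)" by (simp add: Bgrp_def closed)
  next
    show "\<one>\<^bsub>Bgrp k\<^esub> \<in> carrier (Bgrp k)" using k by (simp add: Bgrp_def one_in)
  next
    fix x y z assume "x \<in> carrier (Bgrp k)" "y \<in> carrier (Bgrp k)" "z \<in> carrier (Bgrp k)"
    then show "x \<otimes>\<^bsub>Bgrp k\<^esub> y \<otimes>\<^bsub>Bgrp k\<^esub> z = x \<otimes>\<^bsub>Bgrp k\<^esub> (y \<otimes>\<^bsub>Bgrp k\<^esub> z)"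
      by (simp add: Bgrp_def assoc del: wr_mult.simps)
  next
    fix x assume "x \<in> carrier (Bgrp k)"
    then show "\<one>\<^bsub>Bgrp k\<^esub> \<otimes>\<^bsub>Bgrp k\<^esub> x = x" by (simp add: Bgrp_def one_l del: wr_mult.simps)
  next
    fix x assume "x \<in> carrier (Bgrp k)"
    then have x: "x \<in> Bset k" by (simp add: Bgrp_def)
    show "\<exists>y\<in>carrier (Bgrp k). y \<otimes>\<^bsub>Bgrp k\<^esub> x = \<one>\<^bsub>Bgrp k\<^esub>"
      using inv_in[OF x] inv_l[OF x] by (auto simp: Bgrp_def simp del: wr_mult.simps)
  qed
qed

lemma inv_eq: assumes "k \<ge> 1" "g \<in> Bset k" shows "inv\<^bsub>Bgrp k\<^esub> g = wr_inv g"
proof -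
  interpret group "Bgrp k" using grp assms by blast
  show ?thesis
    by (rule inv_equality) (use assms inv_l inv_in in \<open>auto simp: Bgrp_def\<close>)
qed

lemma conj_theta: "x \<in> Bset k \<Longrightarrow> h \<in> Bset k \<Longrightarrow> theta (wr_mult (wr_mult x h) (wr_inv x)) = theta h"
proof -
  assume a: "x \<in> Bset k" "h \<in> Bset k"
  have "theta (wr_mult (wr_mult x h) (wr_inv x)) = (theta (wr_mult x h) \<noteq> theta (wr_inv x))"
    by (rule theta_mult) (use a closed inv_in in auto)
  also have "\<dots> = theta h" using a by (auto simp: theta_mult theta_inv)
  finally show ?thesis .
qed

lemma cB: "carrier (Bgrp k) = Bset k" and mB: "x \<otimes>\<^bsub>Bgrp k\<^esub> y = wr_mult x y"
  and oB: "\<one>\<^bsub>Bgrp k\<^esub> = wr_one k"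
  by (auto simp: Bgrp_def)

theorem mainTheorem12:
  fixes k :: nat
  assumes "k \<ge> 1"
  shows "Gset k \<lhd> Bgrp k"
proof -
  interpret group "Bgrp k" using grp assms by blast
  have G: "Gset k = {g \<in> Bset k. \<not> theta g}" using Gset_eq assms by blast
  have sub: "subgroup (Gset k) (Bgrp k)"
    apply (rule subgroupI)
    using assms one_in theta_one by (auto simp: G cB mB inv_eq theta_inv closed theta_mult inv_in)
  have "\<forall>x\<in>carrier (Bgrp k). \<forall>h\<in>Gset k. x \<otimes>\<^bsub>Bgrp k\<^esub> h \<otimes>\<^bsub>Bgrp k\<^esub> inv\<^bsub>Bgrp k\<^esub> x \<in> Gset k"
  proof (intro ballI)
    fix x h assume x: "x \<in> carrier (Bgrp k)" and h: "h \<in> Gset k"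
    have xB: "x \<in> Bset k" using x cB by simp
    have hB: "h \<in> Bset k" "\<not> theta h" using h G by auto
    have "x \<otimes>\<^bsub>Bgrp k\<^esub> h \<otimes>\<^bsub>Bgrp k\<^esub> inv\<^bsub>Bgrp k\<^esub> x = wr_mult (wr_mult x h) (wr_inv x)"
      using inv_eq[OF assms xB] by (simp add: mB)
    moreover have "wr_mult (wr_mult x h) (wr_inv x) \<in> Bset k" using xB hB closed inv_in by blast
    ultimately show "x \<otimes>\<^bsub>Bgrp k\<^esub> h \<otimes>\<^bsub>Bgrp k\<^esub> inv\<^bsub>Bgrp k\<^esub> x \<in> Gset k"
      using conj_theta[OF xB hB(1)] hB(2) G by simp
  qed
  then show ?thesis using normal_inv_iff sub by blast
qed

end
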